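(* Let $\vec s=(s_1,\dots,s_k)\in\mathbb{Z}_+^k$ with $n=\sum_l s_l$, and let $\pi_1,\pi_2,\pi_3$ be three $\vec s$-multipermutations. Then there is a pair $i<j$ such that $\mathrm{LCS}(\pi_i,\pi_j)\geq n^{1/3}$.
   Context: For $\vec s=(s_1,\dots,s_k)\in\mathbb{Z}_+^k$, an $\vec s$-multipermutation is a word over the alphabet $\{1,\dots,k\}$ in which each letter $l$ appears exactly $s_l$ times; its length is $\sum_l s_l$. A common subsequence of two words is a word that is a subsequence (letters taken in order, not necessarily consecutive) of both; $\mathrm{LCS}(w,w')$ is the length of a longest common subsequence of $w$ and $w'$. *)

theory Defs
  imports Complex_Main "HOL-Library.Sublist"
begin

definition multiperm :: "nat \<Rightarrow> (nat \<Rightarrow> nat) \<Rightarrow> nat list \<Rightarrow> bool" where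
  "multiperm k s w \<longleftrightarrow> set w \<subseteq> {1..k} \<and> (\<forall>l\<in>{1..k}. count_list w l = s l)"

definition common_subseq :: "'a list \<Rightarrow> 'a list \<Rightarrow> 'a list \<Rightarrow> bool" where
  "common_subseq u w w' \<longleftrightarrow> subseq u w \<and> subseq u w'"

definition LCS :: "'a list \<Rightarrow> 'a list \<Rightarrow> nat" where
  "LCS w w' = Max {length u | u. common_subseq u w w'}"

end

theory Submission
  imports Defs "HOL-Combinatorics.Permutations"
begin


lemma nths_as_map: "nths xs A = map (nth xs) (filter (\<lambda>i. i \<in> A) [0..<length xs])"
proof (induct xs rule: rev_induct)
  case Nil then show ?case by simp
next
  case (snoc x xs) then show ?case by (auto simp: nths_append nth_append)
qed

definition agree :: "('a \<Rightarrow> nat) \<Rightarrow> ('a \<Rightarrow> nat) \<Rightarrow> 'a set \<Rightarrow> bool" where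
  "agree f g S \<longleftrightarrow> (\<forall>x\<in>S. \<forall>y\<in>S. f x < f y \<longrightarrow> g x < g y)"

lemma LCS_ge:
  assumes "common_subseq u xs ys" shows "length u \<le> LCS xs ys"
proof -
  have "{length u |u. common_subseq u xs ys} \<subseteq> {..length xs}"
    by (auto simp: common_subseq_def dest: list_emb_length)
  then have "finite {length u |u. common_subseq u xs ys}" using finite_subset by blast
  then show ?thesis unfolding LCS_def using assms by (intro Max_ge) auto
qed

lemma cs:
  assumes fin: "finite S" and injf: "inj_on f S" and injg: "inj_on g S"
    and fS: "f`S \<subseteq> {..<length xs}" and gS: "g`S \<subseteq> {..<length ys}"
    and ag: "agree f g S" and eq: "\<forall>x\<in>S. xs!(f x) = ys!(g x)"
  shows "card S \<le> LCS xs ys"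
proof -
  define L where "L = filter (\<lambda>i. i \<in> f`S) [0..<length xs]"
  define M where "M = filter (\<lambda>i. i \<in> g`S) [0..<length ys]"
  define \<phi> where "\<phi> = g \<circ> the_inv_into S f"
  have setL: "set L = f`S" using fS by (auto simp: L_def)
  have setM: "set M = g`S" using gS by (auto simp: M_def)
  have phi: "\<phi> (f x) = g x" if "x \<in> S" for x
    using that injf by (simp add: \<phi>_def the_inv_into_f_f)
  have sL: "sorted_wrt (<) L" unfolding L_def by (rule sorted_wrt_filter) simp
  have sM: "sorted_wrt (<) M" unfolding M_def by (rule sorted_wrt_filter) simp
  have "sorted_wrt (\<lambda>a b. \<phi> a < \<phi> b) L"
    using sL
  proof (rule sorted_wrt_mono_rel[rotated])
    fix a b assume "a \<in> set L" "b \<in> set L" "a < b"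
    then obtain x y where "x \<in> S" "y \<in> S" "a = f x" "b = f y" using setL by auto
    then show "\<phi> a < \<phi> b" using ag phi \<open>a < b\<close> by (auto simp: agree_def)
  qed
  then have s2: "sorted_wrt (<) (map \<phi> L)" by (simp add: sorted_wrt_map)
  have "set (map \<phi> L) = g`S" using setL phi by (auto simp: image_iff)
  then have hML: "M = map \<phi> L" using strict_sorted_equal[OF s2 sM] setM by simp
  have e1: "nths xs (f`S) = map (nth xs) L" by (simp add: nths_as_map L_def)
  have "nths ys (g`S) = map (nth ys) M" by (simp add: nths_as_map M_def)
  also have "\<dots> = map (nth xs) L" unfolding hML using setL phi eq by auto
  finally have e2: "nths ys (g`S) = nths xs (f`S)" using e1 by simp
  have "common_subseq (nths xs (f`S)) xs ys" unfolding common_subseq_def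
    by (metis e2 subseq_conv_nths)
  moreover have "length (nths xs (f`S)) = card S"
  proof -
    have "{i. i < length xs \<and> i \<in> f`S} = f`S" using fS by auto
    then show ?thesis using card_image[OF injf] by (simp add: length_nths)
  qed
  ultimately show ?thesis using LCS_ge by metis
qed


definition anti :: "('a \<Rightarrow> nat) \<Rightarrow> ('a \<Rightarrow> nat) \<Rightarrow> 'a set \<Rightarrow> bool" where
  "anti f g S \<longleftrightarrow> (\<forall>x\<in>S. \<forall>y\<in>S. f x < f y \<longrightarrow> g y < g x)"

lemma ES:
  assumes fin: "finite D" and injf: "inj_on f D" and injg: "inj_on g D"
  shows "\<exists>A B. A \<subseteq> D \<and> B \<subseteq> D \<and> agree f g A \<and> anti f g B \<and> card D \<le> card A * card B"
proof (cases "D = {}")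
  case True then show ?thesis by (auto simp: agree_def anti_def)
next
  case ne: False
  define Ch where "Ch x = {C. C \<subseteq> D \<and> agree f g C \<and> x \<in> C \<and> (\<forall>y\<in>C. f y \<le> f x)}" for x
  define L where "L x = Max (card ` Ch x)" for x
  have finCh: "finite (Ch x)" for x
    by (rule finite_subset[of _ "Pow D"]) (auto simp: Ch_def fin)
  have single: "{x} \<in> Ch x" if "x \<in> D" for x using that by (auto simp: Ch_def agree_def)
  have Lobt: "\<exists>C\<in>Ch x. card C = L x" if "x \<in> D" for x
  proof -
    have "L x \<in> card ` Ch x" unfolding L_def using finCh single[OF that] by (intro Max_in) auto
    then show ?thesis by auto
  qed
  have Lge: "card C \<le> L x" if "C \<in> Ch x" for C x
    unfolding L_def using finCh that by (intro Max_ge) auto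
  have key: "L x < L y" if xy: "x \<in> D" "y \<in> D" "f x < f y" "g x < g y" for x y
  proof -
    obtain C where C: "C \<in> Ch x" "card C = L x" using Lobt xy by blast
    have CD: "C \<subseteq> D" and agC: "agree f g C" and xC: "x \<in> C" and fC: "\<forall>z\<in>C. f z \<le> f x"
      using C by (auto simp: Ch_def)
    have finC: "finite C" using CD fin finite_subset by blast
    have gz: "g z < g y" if "z \<in> C" for z
    proof (cases "z = x")
      case True then show ?thesis using xy by simp
    next
      case False
      then have "f z \<noteq> f x" using injf CD that xy(1) by (auto dest: inj_onD)
      then have "f z < f x" using fC that by force
      then have "g z < g x" using agC that xC by (auto simp: agree_def)
      then show ?thesis using xy by simp
    qed
    have yC: "y \<notin> C" using fC xy by force
    have "insert y C \<in> Ch y"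
      unfolding Ch_def agree_def using CD xy fC gz agC
      by (auto simp: agree_def)
    then have "card (insert y C) \<le> L y" by (rule Lge)
    then show ?thesis using yC finC C by simp
  qed
  define a where "a = Max (L ` D)"
  have "a \<in> L ` D" unfolding a_def using fin ne by (intro Max_in) auto
  then obtain x0 where x0: "x0 \<in> D" "L x0 = a" by auto
  obtain A where A: "A \<in> Ch x0" "card A = a" using Lobt x0 by metis
  have Ale: "L x \<le> a" if "x \<in> D" for x unfolding a_def using fin that by auto
  have L1: "1 \<le> L x" if "x \<in> D" for x using Lge[OF single[OF that]] by simp
  define B where "B t = {x\<in>D. L x = t}" for t
  have antiB: "anti f g (B t)" for t
    unfolding anti_def
  proof (intro ballI impI)
    fix x y assume "x \<in> B t" "y \<in> B t" "f x < f y"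
    then have xy: "x \<in> D" "y \<in> D" "L x = L y" "x \<noteq> y" by (auto simp: B_def)
    then have "g x \<noteq> g y" using injg by (auto dest: inj_onD)
    moreover have "\<not> g x < g y" using key[OF xy(1,2) \<open>f x < f y\<close>] xy by auto
    ultimately show "g y < g x" by simp
  qed
  define b where "b = Max ((\<lambda>t. card (B t)) ` (L ` D))"
  have "b \<in> (\<lambda>t. card (B t)) ` (L ` D)" unfolding b_def using fin ne by (intro Max_in) auto
  then obtain t0 where t0: "card (B t0) = b" by auto
  have "card D = (\<Sum>t\<in>L`D. card (B t))"
    using sum.image_gen[OF fin, of "\<lambda>_. (1::nat)" L] by (simp add: B_def)
  also have "\<dots> \<le> card (L ` D) * b"
    using sum_bounded_above[of "L ` D" "\<lambda>t. card (B t)" b] fin unfolding b_def by auto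
  also have "card (L ` D) \<le> a"
  proof -
    have "L ` D \<subseteq> {1..a}" using Ale L1 by auto
    then show ?thesis using card_mono[of "{1..a}" "L ` D"] by simp
  qed
  then have "card (L ` D) * b \<le> a * b" by simp
  finally have "card D \<le> card A * card (B t0)" using A t0 by simp
  moreover have "A \<subseteq> D" "agree f g A" using A by (auto simp: Ch_def)
  moreover have "B t0 \<subseteq> D" by (auto simp: B_def)
  ultimately show ?thesis using antiB by blast
qed


lemma cube_root: fixes n c :: nat assumes "n \<le> c ^ 3" shows "real n powr (1/3) \<le> real c"
proof (cases "c = 0")
  case True then show ?thesis using assms by simp
next
  case False
  then have cpos: "(0::real) < real c" by simp
  have le: "real n \<le> real c ^ 3" using assms by (metis of_nat_le_iff of_nat_power)
  have "real n powr (1/3) \<le> (real c ^ 3) powr (1/3)"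
    by (rule powr_mono2) (use le in auto)
  also have "real c ^ 3 = real c powr (real 3)" using powr_realpow[OF cpos, of 3] by simp
  also have "(real c powr (real 3)) powr (1/3) = real c powr (real 3 * (1/3))" by (rule powr_powr)
  also have "real c powr (real 3 * (1/3)) = real c" using cpos by simp
  finally show ?thesis .
qed
lemma cube_max: fixes a b c n :: nat assumes "n \<le> a * b * c"
  shows "n \<le> a ^ 3 \<or> n \<le> b ^ 3 \<or> n \<le> c ^ 3"
proof -
  define m where "m = max a (max b c)"
  have "a * b * c \<le> m * m * m" unfolding m_def by (intro mult_le_mono) auto
  then have "n \<le> m ^ 3" using assms by (simp add: power3_eq_cube)
  moreover have "m = a \<or> m = b \<or> m = c" unfolding m_def by (auto simp: max_def)
  ultimately show ?thesis by (elim disjE) simp_all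
qed

lemma triple:
  assumes fin: "finite E" and i1: "inj_on h1 E" and i2: "inj_on h2 E" and i3: "inj_on h3 E"
  shows "(\<exists>S\<subseteq>E. agree h1 h2 S \<and> card E \<le> card S ^ 3) \<or> (\<exists>S\<subseteq>E. agree h1 h3 S \<and> card E \<le> card S ^ 3)
     \<or> (\<exists>S\<subseteq>E. agree h2 h3 S \<and> card E \<le> card S ^ 3)"
proof -
  obtain A D where AD: "A \<subseteq> E" "D \<subseteq> E" "agree h1 h2 A" "anti h1 h2 D" "card E \<le> card A * card D"
    using ES[OF fin i1 i2] by blast
  have finD: "finite D" using AD(2) fin by (rule finite_subset)
  obtain A2 B2 where AB: "A2 \<subseteq> D" "B2 \<subseteq> D" "agree h1 h3 A2" "anti h1 h3 B2" "card D \<le> card A2 * card B2"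
    using ES[OF finD inj_on_subset[OF i1 AD(2)] inj_on_subset[OF i3 AD(2)]] by blast
  have ag23: "agree h2 h3 B2" unfolding agree_def
  proof (intro ballI impI)
    fix x y assume xy: "x \<in> B2" "y \<in> B2" "h2 x < h2 y"
    have xD: "x \<in> D" and yD: "y \<in> D" using AB(2) xy(1,2) by blast+
    have xE: "x \<in> E" and yE: "y \<in> E" using AD(2) xD yD by blast+
    have "x \<noteq> y" using xy(3) by blast
    then have ne: "h1 x \<noteq> h1 y" using inj_onD[OF i1 _ xE yE] by blast
    have "\<not> h1 x < h1 y"
    proof
      assume "h1 x < h1 y"
      then have "h2 y < h2 x" using AD(4) xD yD unfolding anti_def by blast
      then show False using xy(3) by simp
    qed
    then have "h1 y < h1 x" using ne by simp
    then show "h3 x < h3 y" using AB(4) xy(1,2) unfolding anti_def by blast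
  qed
  have "card A * card D \<le> card A * (card A2 * card B2)" by (rule mult_le_mono2[OF AB(5)])
  then have "card E \<le> card A * (card A2 * card B2)" using AD(5) by (rule le_trans[rotated])
  then have "card E \<le> card A * card A2 * card B2" by (simp only: mult.assoc)
  then have cm: "card E \<le> card A ^ 3 \<or> card E \<le> card A2 ^ 3 \<or> card E \<le> card B2 ^ 3" by (rule cube_max)
  have A2E: "A2 \<subseteq> E" using AB(1) AD(2) by (rule subset_trans)
  have B2E: "B2 \<subseteq> E" using AB(2) AD(2) by (rule subset_trans)
  from cm show ?thesis
  proof (elim disjE)
    assume "card E \<le> card A ^ 3" then show ?thesis using AD(1,3) by blast
  next
    assume "card E \<le> card A2 ^ 3" then show ?thesis using A2E AB(3) by blast
  next
    assume "card E \<le> card B2 ^ 3" then show ?thesis using B2E ag23 by blast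
  qed
qed

theorem lemma5:
  fixes k :: nat and s :: "nat \<Rightarrow> nat" and n :: nat and \<pi> :: "nat \<Rightarrow> nat list"
  assumes "\<forall>l\<in>{1..k}. s l > 0"
    and "n = (\<Sum>l=1..k. s l)"
    and "\<forall>i\<in>{1,2,3}. multiperm k s (\<pi> i)"
  shows "\<exists>i j. 1 \<le> i \<and> i < j \<and> j \<le> 3 \<and> real (LCS (\<pi> i) (\<pi> j)) \<ge> real n powr (1/3)"
proof -
  have mp: "multiperm k s (\<pi> i)" if "i \<in> {1,2,3}" for i using assms(3) that by blast
  have len: "length (\<pi> i) = n" if "i \<in> {1,2,3}" for i
  proof -
    have "set (\<pi> i) \<subseteq> {1..k}" "\<forall>l\<in>{1..k}. count_list (\<pi> i) l = s l"
      using mp[OF that] by (auto simp: multiperm_def)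
    then show ?thesis using sum_count_set[of "\<pi> i" "{1..k}"] assms(2) by simp
  qed
  have ms: "mset (\<pi> i) = mset (\<pi> 1)" if "i \<in> {1,2,3}" for i
  proof (rule multiset_eqI)
    fix l
    have a: "set (\<pi> i) \<subseteq> {1..k}" "\<forall>l\<in>{1..k}. count_list (\<pi> i) l = s l"
      using mp[OF that] by (auto simp: multiperm_def)
    have b: "set (\<pi> 1) \<subseteq> {1..k}" "\<forall>l\<in>{1..k}. count_list (\<pi> 1) l = s l"
      using mp[of 1] by (auto simp: multiperm_def)
    show "count (mset (\<pi> i)) l = count (mset (\<pi> 1)) l"
    proof (cases "l \<in> {1..k}")
      case True then show ?thesis using a b by (simp add: count_mset)
    next
      case False
      then have "l \<notin> set (\<pi> i)" "l \<notin> set (\<pi> 1)" using a b by auto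
      then show ?thesis by (simp add: count_mset count_list_0_iff)
    qed
  qed
  have perm: "\<exists>p. p permutes {..<n} \<and> (\<forall>x<n. \<pi> 1 ! x = \<pi> i ! p x)" if hi: "i \<in> {1,2,3}" for i
  proof -
    obtain p where p: "p permutes {..<length (\<pi> i)}" "permute_list p (\<pi> i) = \<pi> 1"
      using mset_eq_permutation[of "\<pi> 1" "\<pi> i"] ms[OF hi] by (metis (no_types))
    have "\<forall>x<n. \<pi> 1 ! x = \<pi> i ! p x"
    proof (intro allI impI)
      fix x assume "x < n"
      then have "x < length (\<pi> i)" using len[OF hi] by simp
      then show "\<pi> 1 ! x = \<pi> i ! p x" using permute_list_nth[OF p(1)] p(2) by metis
    qed
    then show ?thesis using p(1) len[OF hi] by auto
  qed
  obtain p2 where p2: "p2 permutes {..<n}" "\<forall>x<n. \<pi> 1 ! x = \<pi> 2 ! p2 x" using perm[of 2] by auto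
  obtain p3 where p3: "p3 permutes {..<n}" "\<forall>x<n. \<pi> 1 ! x = \<pi> 3 ! p3 x" using perm[of 3] by auto
  define E where "E = {..<n}"
  have inj2: "inj_on p2 E" and inj3: "inj_on p3 E" using p2 p3 permutes_inj_on by blast+
  have im2: "p2 ` S \<subseteq> {..<n}" and im3: "p3 ` S \<subseteq> {..<n}" if "S \<subseteq> E" for S
    using that p2 p3 permutes_in_image unfolding E_def by fastforce+
  have cE: "card E = n" by (simp add: E_def)
  have l1: "length (\<pi> 1) = n" and l2: "length (\<pi> 2) = n" and l3: "length (\<pi> 3) = n" using len by auto
  have fE: "finite S" if "S \<subseteq> E" for S using that finite_subset unfolding E_def by blast
  from triple[OF _ inj_on_id inj2 inj3] cE
  consider (a) S where "S \<subseteq> E" "agree id p2 S" "n \<le> card S ^ 3"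
    | (b) S where "S \<subseteq> E" "agree id p3 S" "n \<le> card S ^ 3"
    | (c) S where "S \<subseteq> E" "agree p2 p3 S" "n \<le> card S ^ 3"
    unfolding E_def by auto
  then show ?thesis
  proof cases
    case a
    have "card S \<le> LCS (\<pi> 1) (\<pi> 2)"
    proof (rule cs[OF fE[OF a(1)] inj_on_id inj_on_subset[OF inj2 a(1)]])
      show "id ` S \<subseteq> {..<length (\<pi> 1)}" using a(1) l1 unfolding E_def by auto
      show "p2 ` S \<subseteq> {..<length (\<pi> 2)}" using im2[OF a(1)] l2 by simp
      show "agree id p2 S" by (rule a(2))
      show "\<forall>x\<in>S. \<pi> 1 ! id x = \<pi> 2 ! p2 x"
      proof
        fix x assume "x \<in> S"
        then have "x < n" using a(1) unfolding E_def by auto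
        then show "\<pi> 1 ! id x = \<pi> 2 ! p2 x" using p2(2) by simp
      qed
    qed
    then show ?thesis using cube_root[OF a(3)] by (intro exI[of _ 1] exI[of _ 2]) auto
  next
    case b
    have "card S \<le> LCS (\<pi> 1) (\<pi> 3)"
    proof (rule cs[OF fE[OF b(1)] inj_on_id inj_on_subset[OF inj3 b(1)]])
      show "id ` S \<subseteq> {..<length (\<pi> 1)}" using b(1) l1 unfolding E_def by auto
      show "p3 ` S \<subseteq> {..<length (\<pi> 3)}" using im3[OF b(1)] l3 by simp
      show "agree id p3 S" by (rule b(2))
      show "\<forall>x\<in>S. \<pi> 1 ! id x = \<pi> 3 ! p3 x"
      proof
        fix x assume "x \<in> S"
        then have "x < n" using b(1) unfolding E_def by auto
        then show "\<pi> 1 ! id x = \<pi> 3 ! p3 x" using p3(2) by simp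
      qed
    qed
    then show ?thesis using cube_root[OF b(3)] by (intro exI[of _ 1] exI[of _ 3]) auto
  next
    case c
    have "card S \<le> LCS (\<pi> 2) (\<pi> 3)"
    proof (rule cs[OF fE[OF c(1)] inj_on_subset[OF inj2 c(1)] inj_on_subset[OF inj3 c(1)]])
      show "p2 ` S \<subseteq> {..<length (\<pi> 2)}" using im2[OF c(1)] l2 by simp
      show "p3 ` S \<subseteq> {..<length (\<pi> 3)}" using im3[OF c(1)] l3 by simp
      show "agree p2 p3 S" by (rule c(2))
      show "\<forall>x\<in>S. \<pi> 2 ! p2 x = \<pi> 3 ! p3 x"
      proof
        fix x assume "x \<in> S"
        then have "x < n" using c(1) unfolding E_def by auto
        then show "\<pi> 2 ! p2 x = \<pi> 3 ! p3 x" using p2(2) p3(2) by metis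
      qed
    qed
    then show ?thesis using cube_root[OF c(3)] by (intro exI[of _ 2] exI[of _ 3]) auto
  qed
qed

end
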